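(* Let $i,m\in[1,M]$ be black vertices and $j,n\in[1,N]$ white vertices, and define $a$ by $\#\{i,j,m,n\}=4-a$. Let $(k,\ell),(p,q)$ be two further black–white pairs and define $b$ by $\#\{i,j,m,n,k,\ell,p,q\}=8-b$. Then $$\mathbb E[A_{ij}A_{mn}]=O\Big(\frac{d_b}N\Big)^{2-\lfloor a/2\rfloor},\qquad \mathbb E[A_{ij}A_{mn}A_{k\ell}A_{pq}]=O\Big(\frac{d_b}N\Big)^{4-\lfloor b/2\rfloor}.$$
   Context: Let $M\ge N$, $\alpha=M/N\ge1$ fixed, $N\to\infty$; $d_b,d_w$ positive integers with $Md_b=Nd_w$, $N^{c_0}\le d_b\le N^{2/3-c_0}$ for a fixed $c_0>0$. $A\in\{0,1\}^{M\times N}$ is the biadjacency matrix of a bipartite graph drawn uniformly at random from the set of bipartite graphs with $M$ black vertices of degree $d_b$ and $N$ white vertices of degree $d_w$; $A_{xy}=1$ iff black vertex $x$ is adjacent to white vertex $y$. Black and white vertices are distinct labels, so $\#\{\cdot\}$ counts distinct vertices. The expectation is under the uniform measure and implicit constants do not depend on $N$ or the indices. *)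

theory Defs
  imports Complex_Main
begin

text \<open>A matrix is a predicate A x y, meaning
  black x is adjacent to white y; it is required to vanish outside the box.\<close>
definition biregular_graphs :: "nat \<Rightarrow> nat \<Rightarrow> nat \<Rightarrow> nat \<Rightarrow> (nat \<Rightarrow> nat \<Rightarrow> bool) set" where
  "biregular_graphs M N db dw =
     {A. (\<forall>x y. A x y \<longrightarrow> x < M \<and> y < N)
       \<and> (\<forall>x<M. card {y. y < N \<and> A x y} = db)
       \<and> (\<forall>y<N. card {x. x < M \<and> A x y} = dw)}"

definition unif_expect :: "nat \<Rightarrow> nat \<Rightarrow> nat \<Rightarrow> nat \<Rightarrow> ((nat \<Rightarrow> nat \<Rightarrow> bool) \<Rightarrow> real) \<Rightarrow> real" where
  "unif_expect M N db dw f =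
     (\<Sum>A\<in>biregular_graphs M N db dw. f A) / real (card (biregular_graphs M N db dw))"

definition entry :: "(nat \<Rightarrow> nat \<Rightarrow> bool) \<Rightarrow> nat \<Rightarrow> nat \<Rightarrow> real" where
  "entry A x y = (if A x y then 1 else 0)"

end

theory Submission
  imports Defs
begin


abbreviation G where "G M N db dw \<equiv> biregular_graphs M N db dw"

definition cnt :: "nat \<Rightarrow> nat \<Rightarrow> nat \<Rightarrow> nat \<Rightarrow> (nat \<times> nat) set \<Rightarrow> nat" where
  "cnt M N db dw P = card {A \<in> biregular_graphs M N db dw. \<forall>e\<in>P. A (fst e) (snd e)}"

lemma finite_G: "finite (biregular_graphs M N db dw)"
proof -
  have "biregular_graphs M N db dw \<subseteq> (\<lambda>S x y. (x,y)\<in>S) ` Pow ({..<M}\<times>{..<N})"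
  proof
    fix A assume A: "A \<in> biregular_graphs M N db dw"
    have "A = (\<lambda>x y. (x,y) \<in> {(x,y). A x y})" by simp
    moreover have "{(x,y). A x y} \<in> Pow ({..<M}\<times>{..<N})"
      using A unfolding biregular_graphs_def by auto
    ultimately show "A \<in> (\<lambda>S x y. (x,y)\<in>S) ` Pow ({..<M}\<times>{..<N})" by blast
  qed
  then show ?thesis by (rule finite_subset) simp
qed

definition tr :: "nat \<Rightarrow> nat \<Rightarrow> nat \<Rightarrow> nat" where
  "tr a b z = (if z = a then b else if z = b then a else z)"

lemma tr_tr[simp]: "tr a b (tr a b z) = z" by (simp add: tr_def)
lemma tr_lt: "a < N \<Longrightarrow> b < N \<Longrightarrow> tr a b z < N \<longleftrightarrow> z < N" by (auto simp: tr_def)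
lemma inj_tr: "inj (tr a b)" by (metis injI tr_tr)
lemma tr_image: "y \<in> tr a b ` S \<longleftrightarrow> tr a b y \<in> S" by (metis imageI image_iff tr_tr)

lemma swapW:
  assumes y1: "y1 < N" and y2: "y2 < N" and n1: "y1 \<notin> snd ` Q" and n2: "y2 \<notin> snd ` Q"
  shows "cnt M N db dw (insert (x0,y1) Q) \<le> cnt M N db dw (insert (x0,y2) Q)"
proof -
  define sw where "sw = (\<lambda>(A::nat\<Rightarrow>nat\<Rightarrow>bool) x z. A x (tr y1 y2 z))"
  let ?S1 = "{A \<in> biregular_graphs M N db dw. \<forall>e\<in>insert (x0,y1) Q. A (fst e) (snd e)}"
  let ?S2 = "{A \<in> biregular_graphs M N db dw. \<forall>e\<in>insert (x0,y2) Q. A (fst e) (snd e)}"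
  have inj: "inj_on sw ?S1"
  proof (rule inj_onI)
    fix A B assume "sw A = sw B"
    then have "\<And>x z. A x (tr y1 y2 (tr y1 y2 z)) = B x (tr y1 y2 (tr y1 y2 z))"
      unfolding sw_def by (metis case_prod_conv)
    then show "A = B" by (simp add: fun_eq_iff)
  qed
  have img: "sw ` ?S1 \<subseteq> ?S2"
  proof
    fix B assume "B \<in> sw ` ?S1"
    then obtain A where A: "A \<in> ?S1" and B: "B = sw A" by blast
    have Bxz: "B x z = A x (tr y1 y2 z)" for x z by (simp add: B sw_def)
    have AG: "A \<in> biregular_graphs M N db dw" using A by blast
    have box: "\<forall>x y. B x y \<longrightarrow> x < M \<and> y < N"
      using AG tr_lt[OF y1 y2] unfolding biregular_graphs_def Bxz by blast
    have rows: "card {y. y < N \<and> B x y} = db" if "x < M" for x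
    proof -
      have "{y. y < N \<and> B x y} = tr y1 y2 ` {w. w < N \<and> A x w}"
        unfolding Bxz by (rule set_eqI) (simp add: tr_image tr_lt[OF y1 y2])
      then have "card {y. y < N \<and> B x y} = card {w. w < N \<and> A x w}"
        by (simp add: card_image inj_on_subset[OF inj_tr])
      then show ?thesis using AG that unfolding biregular_graphs_def by simp
    qed
    have cols: "card {x. x < M \<and> B x y} = dw" if "y < N" for y
      using AG that tr_lt[OF y1 y2] unfolding biregular_graphs_def Bxz by simp
    have BG: "B \<in> biregular_graphs M N db dw"
      unfolding biregular_graphs_def using box rows cols by blast
    have "tr y1 y2 z = z" if "z \<in> snd ` Q" for z using that n1 n2 by (auto simp: tr_def)
    then have "\<forall>e\<in>Q. B (fst e) (snd e)" using A unfolding Bxz by force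
    moreover have "B x0 y2" using A unfolding Bxz by (simp add: tr_def)
    ultimately show "B \<in> ?S2" using BG by auto
  qed
  have fin: "finite ?S2" using finite_G by simp
  show ?thesis unfolding cnt_def by (rule card_inj_on_le[OF inj img fin])
qed

lemma swapB:
  assumes y1: "y1 < M" and y2: "y2 < M" and n1: "y1 \<notin> fst ` Q" and n2: "y2 \<notin> fst ` Q"
  shows "cnt M N db dw (insert (y1,x0) Q) \<le> cnt M N db dw (insert (y2,x0) Q)"
proof -
  define sw where "sw = (\<lambda>(A::nat\<Rightarrow>nat\<Rightarrow>bool) z x. A (tr y1 y2 z) x)"
  let ?S1 = "{A \<in> biregular_graphs M N db dw. \<forall>e\<in>insert (y1,x0) Q. A (fst e) (snd e)}"
  let ?S2 = "{A \<in> biregular_graphs M N db dw. \<forall>e\<in>insert (y2,x0) Q. A (fst e) (snd e)}"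
  have inj: "inj_on sw ?S1"
  proof (rule inj_onI)
    fix A B assume "sw A = sw B"
    then have "\<And>x z. A (tr y1 y2 (tr y1 y2 z)) x = B (tr y1 y2 (tr y1 y2 z)) x"
      unfolding sw_def by (metis case_prod_conv)
    then show "A = B" by (simp add: fun_eq_iff)
  qed
  have img: "sw ` ?S1 \<subseteq> ?S2"
  proof
    fix B assume "B \<in> sw ` ?S1"
    then obtain A where A: "A \<in> ?S1" and B: "B = sw A" by blast
    have Bxz: "B z x = A (tr y1 y2 z) x" for x z by (simp add: B sw_def)
    have AG: "A \<in> biregular_graphs M N db dw" using A by blast
    have box: "\<forall>x y. B x y \<longrightarrow> x < M \<and> y < N"
      using AG tr_lt[OF y1 y2] unfolding biregular_graphs_def Bxz by blast
    have cols: "card {y. y < M \<and> B y x} = dw" if "x < N" for x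
    proof -
      have "{y. y < M \<and> B y x} = tr y1 y2 ` {w. w < M \<and> A w x}"
        unfolding Bxz by (rule set_eqI) (simp add: tr_image tr_lt[OF y1 y2])
      then have "card {y. y < M \<and> B y x} = card {w. w < M \<and> A w x}"
        by (simp add: card_image inj_on_subset[OF inj_tr])
      then show ?thesis using AG that unfolding biregular_graphs_def by simp
    qed
    have rows: "card {x. x < N \<and> B y x} = db" if "y < M" for y
      using AG that tr_lt[OF y1 y2] unfolding biregular_graphs_def Bxz by simp
    have BG: "B \<in> biregular_graphs M N db dw"
      unfolding biregular_graphs_def using box rows cols by blast
    have "tr y1 y2 z = z" if "z \<in> fst ` Q" for z using that n1 n2 by (auto simp: tr_def)
    then have "\<forall>e\<in>Q. B (fst e) (snd e)" using A unfolding Bxz by force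
    moreover have "B y2 x0" using A unfolding Bxz by (simp add: tr_def)
    ultimately show "B \<in> ?S2" using BG by auto
  qed
  have fin: "finite ?S2" using finite_G by simp
  show ?thesis unfolding cnt_def by (rule card_inj_on_le[OF inj img fin])
qed




lemma dcW:
  fixes Q :: "(nat \<times> nat) set"
  assumes x0: "x0 < M" and y0: "y0 < N" and ny: "y0 \<notin> snd ` Q" and fQ: "finite Q"
  shows "(N - card (snd ` Q)) * cnt M N db dw (insert (x0,y0) Q) \<le> db * cnt M N db dw Q"
proof -
  let ?H = "{A \<in> biregular_graphs M N db dw. \<forall>e\<in>Q. A (fst e) (snd e)}"
  define Y where "Y = {..<N} - snd ` Q"
  have finH: "finite ?H" using finite_G by simp
  have finY: "finite Y" unfolding Y_def by simp
  have eqc: "cnt M N db dw (insert (x0,y) Q) = cnt M N db dw (insert (x0,y0) Q)" if "y \<in> Y" for y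
    using that y0 ny swapW[of y N y0 Q M db dw x0] swapW[of y0 N y Q M db dw x0]
    unfolding Y_def by (auto intro: le_antisym)
  have c2: "cnt M N db dw (insert (x0,y) Q) = card {A \<in> ?H. A x0 y}" for y
    unfolding cnt_def by (rule arg_cong[where f=card]) auto
  have c3: "card {A \<in> ?H. A x0 y} = (\<Sum>A\<in>?H. (of_bool (A x0 y) :: nat))" for y
  proof -
    have e: "{A \<in> ?H. A x0 y} = ?H \<inter> {A. A x0 y}" by blast
    have s: "(\<Sum>A\<in>?H. (of_bool (A x0 y) :: nat)) = of_nat (card (?H \<inter> {A. A x0 y}))"
      by (rule sum_of_bool_eq; rule finH)
    show ?thesis by (simp only: e s of_nat_id)
  qed
  have "card Y * cnt M N db dw (insert (x0,y0) Q) = (\<Sum>y\<in>Y. card {A \<in> ?H. A x0 y})"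
    using eqc c2 by simp
  also have "\<dots> = (\<Sum>y\<in>Y. \<Sum>A\<in>?H. (of_bool (A x0 y) :: nat))" using c3 by simp
  also have "\<dots> = (\<Sum>A\<in>?H. \<Sum>y\<in>Y. (of_bool (A x0 y) :: nat))" by (rule sum.swap)
  also have "\<dots> \<le> (\<Sum>A\<in>?H. db)"
  proof (rule sum_mono)
    fix A assume A: "A \<in> ?H"
    have "(\<Sum>y\<in>Y. (of_bool (A x0 y) :: nat)) = card (Y \<inter> {y. A x0 y})"
      by (rule trans[OF sum_of_bool_eq of_nat_id]; rule finY)
    also have "\<dots> \<le> card {y. y < N \<and> A x0 y}"
      by (rule card_mono) (auto simp: Y_def)
    also have "\<dots> = db" using A x0 unfolding biregular_graphs_def by auto
    finally show "(\<Sum>y\<in>Y. (of_bool (A x0 y) :: nat)) \<le> db" .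
  qed
  also have "\<dots> = db * cnt M N db dw Q" unfolding cnt_def by simp
  finally have 1: "card Y * cnt M N db dw (insert (x0,y0) Q) \<le> db * cnt M N db dw Q" .
  have "N - card (snd ` Q) \<le> card Y"
    unfolding Y_def using diff_card_le_card_Diff[of "snd ` Q" "{..<N}"] fQ by simp
  then show ?thesis using 1 by (meson le_trans mult_le_mono1)
qed

lemma dcB:
  fixes Q :: "(nat \<times> nat) set"
  assumes x0: "x0 < N" and y0: "y0 < M" and ny: "y0 \<notin> fst ` Q" and fQ: "finite Q"
  shows "(M - card (fst ` Q)) * cnt M N db dw (insert (y0,x0) Q) \<le> dw * cnt M N db dw Q"
proof -
  let ?H = "{A \<in> biregular_graphs M N db dw. \<forall>e\<in>Q. A (fst e) (snd e)}"
  define Y where "Y = {..<M} - fst ` Q"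
  have finH: "finite ?H" using finite_G by simp
  have finY: "finite Y" unfolding Y_def by simp
  have eqc: "cnt M N db dw (insert (y,x0) Q) = cnt M N db dw (insert (y0,x0) Q)" if "y \<in> Y" for y
    using that y0 ny swapB[of y M y0 Q N db dw x0] swapB[of y0 M y Q N db dw x0]
    unfolding Y_def by (auto intro: le_antisym)
  have c2: "cnt M N db dw (insert (y,x0) Q) = card {A \<in> ?H. A y x0}" for y
    unfolding cnt_def by (rule arg_cong[where f=card]) auto
  have c3: "card {A \<in> ?H. A y x0} = (\<Sum>A\<in>?H. (of_bool (A y x0) :: nat))" for y
  proof -
    have e: "{A \<in> ?H. A y x0} = ?H \<inter> {A. A y x0}" by blast
    have s: "(\<Sum>A\<in>?H. (of_bool (A y x0) :: nat)) = of_nat (card (?H \<inter> {A. A y x0}))"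
      by (rule sum_of_bool_eq; rule finH)
    show ?thesis by (simp only: e s of_nat_id)
  qed
  have "card Y * cnt M N db dw (insert (y0,x0) Q) = (\<Sum>y\<in>Y. card {A \<in> ?H. A y x0})"
    using eqc c2 by simp
  also have "\<dots> = (\<Sum>y\<in>Y. \<Sum>A\<in>?H. (of_bool (A y x0) :: nat))" using c3 by simp
  also have "\<dots> = (\<Sum>A\<in>?H. \<Sum>y\<in>Y. (of_bool (A y x0) :: nat))" by (rule sum.swap)
  also have "\<dots> \<le> (\<Sum>A\<in>?H. dw)"
  proof (rule sum_mono)
    fix A assume A: "A \<in> ?H"
    have "(\<Sum>y\<in>Y. (of_bool (A y x0) :: nat)) = card (Y \<inter> {y. A y x0})"
      by (rule trans[OF sum_of_bool_eq of_nat_id]; rule finY)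
    also have "\<dots> \<le> card {y. y < M \<and> A y x0}"
      by (rule card_mono) (auto simp: Y_def)
    also have "\<dots> = dw" using A x0 unfolding biregular_graphs_def by auto
    finally show "(\<Sum>y\<in>Y. (of_bool (A y x0) :: nat)) \<le> dw" .
  qed
  also have "\<dots> = dw * cnt M N db dw Q" unfolding cnt_def by simp
  finally have 1: "card Y * cnt M N db dw (insert (y0,x0) Q) \<le> dw * cnt M N db dw Q" .
  have "M - card (fst ` Q) \<le> card Y"
    unfolding Y_def using diff_card_le_card_Diff[of "fst ` Q" "{..<M}"] fQ by simp
  then show ?thesis using 1 by (meson le_trans mult_le_mono1)
qed




definition vv :: "(nat \<times> nat) set \<Rightarrow> nat" where
  "vv P = card (fst ` P) + card (snd ` P)"

lemma cnt_mono: "cnt M N db dw (insert e Q) \<le> cnt M N db dw Q"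
  unfolding cnt_def by (rule card_mono) (use finite_G in auto)

lemma cnt_le_G: "cnt M N db dw Q \<le> card (biregular_graphs M N db dw)"
  unfolding cnt_def by (rule card_mono) (use finite_G in auto)

lemma step_bound:
  fixes Q :: "(nat \<times> nat) set"
  assumes x: "x < M" and y: "y < N" and fQ: "finite Q" and cQ: "card Q \<le> 3"
    and N8: "N \<ge> 8" and MN: "M \<ge> N" and deg: "M * db = N * dw"
    and new: "x \<notin> fst ` Q \<or> y \<notin> snd ` Q"
  shows "real (cnt M N db dw (insert (x,y) Q)) \<le> (2 * real db / real N) * real (cnt M N db dw Q)"
proof -
  let ?P = "cnt M N db dw (insert (x,y) Q)" and ?Q = "cnt M N db dw Q"
  have Npos: "real N > 0" using N8 by simp
  show ?thesis
  proof (cases "y \<notin> snd ` Q")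
    case True
    have s: "card (snd ` Q) \<le> 3" using card_image_le[OF fQ, of snd] cQ by simp
    have 1: "(N - card (snd ` Q)) * ?P \<le> db * ?Q" by (rule dcW[OF x y True fQ])
    have 2: "real N / 2 \<le> real (N - card (snd ` Q))" using s N8 by (simp add: of_nat_diff)
    have "real N / 2 * real ?P \<le> real (N - card (snd ` Q)) * real ?P"
      using 2 by (intro mult_right_mono) auto
    also have "\<dots> \<le> real db * real ?Q" using 1 by (metis of_nat_le_iff of_nat_mult)
    finally have "real N / 2 * real ?P \<le> real db * real ?Q" .
    then show ?thesis using Npos by (simp add: field_simps)
  next
    case False
    then have nx: "x \<notin> fst ` Q" using new by simp
    have s: "card (fst ` Q) \<le> 3" using card_image_le[OF fQ, of fst] cQ by simp
    have 1: "(M - card (fst ` Q)) * ?P \<le> dw * ?Q" by (rule dcB[OF y x nx fQ])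
    have 2: "real M / 2 \<le> real (M - card (fst ` Q))" using s N8 MN by (simp add: of_nat_diff)
    have "real M / 2 * real ?P \<le> real (M - card (fst ` Q)) * real ?P"
      using 2 by (intro mult_right_mono) auto
    also have "\<dots> \<le> real dw * real ?Q" using 1 by (metis of_nat_le_iff of_nat_mult)
    finally have 3: "real M / 2 * real ?P \<le> real dw * real ?Q" .
    have d: "real M * real db = real N * real dw" using deg by (metis of_nat_mult)
    have "real N * (real M / 2 * real ?P) \<le> real N * (real dw * real ?Q)"
      using 3 Npos by simp
    also have "\<dots> = real M * (real db * real ?Q)" using d by (simp add: algebra_simps)
    finally have "real M * (real N / 2 * real ?P) \<le> real M * (real db * real ?Q)"
      by (simp add: algebra_simps)
    moreover have "real M > 0" using MN N8 by simp
    ultimately have "real N / 2 * real ?P \<le> real db * real ?Q" by simp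
    then show ?thesis using Npos by (simp add: field_simps)
  qed
qed

lemma mainind:
  fixes es :: "(nat \<times> nat) list"
  assumes N8: "N \<ge> 8" and MN: "M \<ge> N" and deg: "M * db = N * dw"
  shows "(\<forall>e\<in>set es. fst e < M \<and> snd e < N) \<Longrightarrow> length es \<le> 4 \<Longrightarrow>
    \<forall>k. 2 * k \<le> vv (set es) + 1 \<longrightarrow>
      real (cnt M N db dw (set es)) \<le> real (card (biregular_graphs M N db dw)) * (2 * real db / real N) ^ k"
proof (induction es)
  case Nil
  have "cnt M N db dw {} = card (biregular_graphs M N db dw)" unfolding cnt_def by simp
  then show ?case
  proof (intro allI impI)
    fix k assume "2 * k \<le> vv (set []) + 1"
    then have "k = 0" by (simp add: vv_def)
    then show "real (cnt M N db dw (set [])) \<le> real (card (biregular_graphs M N db dw)) * (2 * real db / real N) ^ k"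
      using \<open>cnt M N db dw {} = card (biregular_graphs M N db dw)\<close> by simp
  qed
next
  case (Cons e es)
  obtain x y where e: "e = (x,y)" by (cases e)
  let ?Q = "set es"
  let ?r = "2 * real db / real N"
  let ?g = "real (card (biregular_graphs M N db dw))"
  have IH: "\<forall>k. 2 * k \<le> vv ?Q + 1 \<longrightarrow> real (cnt M N db dw ?Q) \<le> ?g * ?r ^ k"
    using Cons by simp
  have xy: "x < M" "y < N" using Cons.prems e by auto
  have cQ: "card ?Q \<le> 3" using Cons.prems card_length[of es] by simp
  have rpos: "?r \<ge> 0" by simp
  show ?case
  proof (intro allI impI)
    fix k assume k: "2 * k \<le> vv (set (e # es)) + 1"
    have setP: "set (e # es) = insert (x,y) ?Q" using e by simp
    show "real (cnt M N db dw (set (e # es))) \<le> ?g * ?r ^ k"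
    proof (cases "x \<in> fst ` ?Q \<and> y \<in> snd ` ?Q")
      case True
      then have "vv (set (e # es)) = vv ?Q" unfolding setP vv_def by (simp add: insert_absorb)
      then have "real (cnt M N db dw ?Q) \<le> ?g * ?r ^ k" using IH k by simp
      moreover have "cnt M N db dw (set (e # es)) \<le> cnt M N db dw ?Q"
        unfolding setP by (rule cnt_mono)
      ultimately show ?thesis by linarith
    next
      case False
      have st: "real (cnt M N db dw (set (e # es))) \<le> ?r * real (cnt M N db dw ?Q)"
        unfolding setP using step_bound[OF xy _ cQ N8 MN deg] False by auto
      have vvle: "vv (set (e # es)) \<le> vv ?Q + 2"
        unfolding setP vv_def using card_insert_le_m1
        by (simp add: card_insert_if)
      show ?thesis
      proof (cases k)
        case 0
        have "cnt M N db dw (set (e # es)) \<le> card (biregular_graphs M N db dw)" by (rule cnt_le_G)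
        then show ?thesis using 0 by simp
      next
        case (Suc j)
        have "2 * j \<le> vv ?Q + 1" using k vvle Suc by simp
        then have "real (cnt M N db dw ?Q) \<le> ?g * ?r ^ j" using IH by simp
        then have "?r * real (cnt M N db dw ?Q) \<le> ?r * (?g * ?r ^ j)"
          by (rule mult_left_mono) simp
        then show ?thesis using st Suc by (simp add: algebra_simps)
      qed
    qed
  qed
qed




lemma ue_bound:
  fixes es :: "(nat \<times> nat) list"
  assumes N8: "N \<ge> 8" and MN: "M \<ge> N" and deg: "M * db = N * dw"
    and box: "\<forall>e\<in>set es. fst e < M \<and> snd e < N" and len: "length es \<le> 4"
    and k: "2 * k \<le> vv (set es) + 1" and k4: "k \<le> 4"
    and f: "f = (\<lambda>A. of_bool (\<forall>e\<in>set es. A (fst e) (snd e)))"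
  shows "unif_expect M N db dw f \<le> 16 * (real db / real N) ^ k"
proof -
  let ?G = "biregular_graphs M N db dw"
  let ?g = "real (card ?G)"
  let ?c = "real (cnt M N db dw (set es))"
  have s: "(\<Sum>A\<in>?G. f A) = real (card (?G \<inter> {A. \<forall>e\<in>set es. A (fst e) (snd e)}))"
    unfolding f by (rule sum_of_bool_eq; rule finite_G)
  have "?G \<inter> {A. \<forall>e\<in>set es. A (fst e) (snd e)} = {A \<in> ?G. \<forall>e\<in>set es. A (fst e) (snd e)}" by blast
  then have ue: "unif_expect M N db dw f = ?c / ?g"
    unfolding unif_expect_def s cnt_def by simp
  have c: "?c \<le> ?g * (2 * real db / real N) ^ k"
    using mainind[OF N8 MN deg box len] k by blast
  have q: "0 \<le> (real db / real N) ^ k" by simp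
  have "(2 * real db / real N) ^ k = 2 ^ k * (real db / real N) ^ k"
    by (simp add: power_mult_distrib[symmetric])
  also have "\<dots> \<le> 16 * (real db / real N) ^ k"
  proof (rule mult_right_mono[OF _ q])
    have "(2::real) ^ k \<le> 2 ^ 4" by (rule power_increasing[OF k4]) simp
    then show "(2::real) ^ k \<le> 16" by simp
  qed
  finally have r: "(2 * real db / real N) ^ k \<le> 16 * (real db / real N) ^ k" .
  show ?thesis
  proof (cases "?g = 0")
    case True
    then show ?thesis using ue q by simp
  next
    case False
    then have gp: "?g > 0" by simp
    have "?c / ?g \<le> (2 * real db / real N) ^ k"
      using c gp by (simp add: divide_le_eq mult.commute)
    then show ?thesis using ue r by linarith
  qed
qed

theorem mainTheorem10:
  fixes alpha c0 :: real
  assumes "alpha \<ge> 1" and "c0 > 0"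
  shows "\<exists>C::real. \<exists>N0::nat. \<forall>N M db dw :: nat.
     (N \<ge> N0 \<and> real M = alpha * real N \<and> M * db = N * dw \<and> db > 0 \<and> dw > 0
      \<and> real N powr c0 \<le> real db \<and> real db \<le> real N powr (2/3 - c0)) \<longrightarrow>
     (\<forall>i m j n :: nat. i < M \<and> m < M \<and> j < N \<and> n < N \<longrightarrow>
        unif_expect M N db dw (\<lambda>A. entry A i j * entry A m n)
          \<le> C * (real db / real N) ^ (2 - (4 - (card {i, m} + card {j, n})) div 2))
     \<and> (\<forall>i m k p j n l q :: nat.
          i < M \<and> m < M \<and> k < M \<and> p < M \<and> j < N \<and> n < N \<and> l < N \<and> q < N \<longrightarrow>
        unif_expect M N db dw (\<lambda>A. entry A i j * entry A m n * entry A k l * entry A p q)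
          \<le> C * (real db / real N) ^ (4 - (8 - (card {i, m, k, p} + card {j, n, l, q})) div 2))"
proof (intro exI allI impI conjI)
  fix N M db dw :: nat
  assume H: "N \<ge> 8 \<and> real M = alpha * real N \<and> M * db = N * dw \<and> db > 0 \<and> dw > 0
      \<and> real N powr c0 \<le> real db \<and> real db \<le> real N powr (2/3 - c0)"
  have N8: "N \<ge> 8" and deg: "M * db = N * dw" using H by auto
  have "real M \<ge> real N" using H assms(1) by (simp add: mult_right_mono[of 1 alpha "real N", simplified])
  then have MN: "M \<ge> N" by simp
  fix i m j n :: nat
  {
    assume b: "i < M \<and> m < M \<and> j < N \<and> n < N"
    let ?es = "[(i,j),(m,n)]"
    have f: "(\<lambda>A. entry A i j * entry A m n) = (\<lambda>A. of_bool (\<forall>e\<in>set ?es. A (fst e) (snd e)))"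
      by (auto simp: fun_eq_iff entry_def)
    have v: "vv (set ?es) = card {i, m} + card {j, n}" by (simp add: vv_def)
    have kk: "2 * (2 - (4 - (card {i, m} + card {j, n})) div 2) \<le> vv (set ?es) + 1"
      unfolding v by presburger
    show "unif_expect M N db dw (\<lambda>A. entry A i j * entry A m n)
          \<le> 16 * (real db / real N) ^ (2 - (4 - (card {i, m} + card {j, n})) div 2)"
      by (rule ue_bound[OF N8 MN deg _ _ kk _ f]) (use b in auto)
  }
  fix k p l q :: nat
  {
    assume b: "i < M \<and> m < M \<and> k < M \<and> p < M \<and> j < N \<and> n < N \<and> l < N \<and> q < N"
    let ?es = "[(i,j),(m,n),(k,l),(p,q)]"
    have f: "(\<lambda>A. entry A i j * entry A m n * entry A k l * entry A p q) = (\<lambda>A. of_bool (\<forall>e\<in>set ?es. A (fst e) (snd e)))"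
      by (auto simp: fun_eq_iff entry_def)
    have v: "vv (set ?es) = card {i, m, k, p} + card {j, n, l, q}" by (simp add: vv_def)
    have kk: "2 * (4 - (8 - (card {i, m, k, p} + card {j, n, l, q})) div 2) \<le> vv (set ?es) + 1"
      unfolding v by presburger
    show "unif_expect M N db dw (\<lambda>A. entry A i j * entry A m n * entry A k l * entry A p q)
          \<le> 16 * (real db / real N) ^ (4 - (8 - (card {i, m, k, p} + card {j, n, l, q})) div 2)"
      by (rule ue_bound[OF N8 MN deg _ _ kk _ f]) (use b in auto)
  }
qed


end
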